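(* Let $0\le V_0\le V_1\le\infty$. Then the set of points $p\in\bigcup_{V\in[V_0,V_1]}S_V$ whose forward semiorbit $\{f^k(p)\}_{k\ge0}$ is bounded is a closed subset of $\mathbb{R}^3$.
   Context: $f:\mathbb{R}^3\to\mathbb{R}^3$, $f(x,y,z)=(2xy-z,x,y)$. The Fricke–Vogt character is $I(x,y,z)=x^2+y^2+z^2-2xyz-1$, which satisfies $I\circ f=I$, and $S_V=\{p\in\mathbb{R}^3: I(p)=V\}$ for $V\ge0$ (for $V_1=\infty$ the union is over $[V_0,\infty)$). *)

theory Defs
  imports "HOL-Analysis.Analysis" "HOL-Library.Extended_Real"
begin

definition fmap :: "real \<times> real \<times> real \<Rightarrow> real \<times> real \<times> real" where
  "fmap p = (case p of (x, y, z) \<Rightarrow> (2 * x * y - z, x, y))"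

definition FV :: "real \<times> real \<times> real \<Rightarrow> real" where
  "FV p = (case p of (x, y, z) \<Rightarrow> x\<^sup>2 + y\<^sup>2 + z\<^sup>2 - 2 * x * y * z - 1)"

definition level_set :: "real \<Rightarrow> (real \<times> real \<times> real) set" where
  "level_set V = {p. FV p = V}"

end

theory Submission
  imports Defs
begin

lemma fmap_simp[simp]: "fmap (x,y,z) = (2*x*y - z, x, y)"
  by (simp add: fmap_def)

lemma FV_simp: "FV (x,y,z) = x^2 + y^2 + z^2 - 2*x*y*z - 1"
  by (simp add: FV_def)

lemma FV_fmap: "FV (fmap p) = FV p"
  by (cases p) (auto simp: FV_simp power2_eq_square algebra_simps)

lemma FV_iter: "FV ((fmap ^^ k) p) = FV p"
  by (induction k) (auto simp: FV_fmap)

definition Rc :: "real \<times> real \<times> real \<Rightarrow> bool" where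
  "Rc p = (1 < \<bar>fst p\<bar> \<and> 1 < \<bar>fst (snd p)\<bar> \<and> \<bar>snd (snd p)\<bar> \<le> \<bar>fst p\<bar> * \<bar>fst (snd p)\<bar>)"

definition Ro :: "real \<times> real \<times> real \<Rightarrow> bool" where
  "Ro p = (1 < \<bar>fst p\<bar> \<and> 1 < \<bar>fst (snd p)\<bar> \<and> \<bar>snd (snd p)\<bar> < \<bar>fst p\<bar> * \<bar>fst (snd p)\<bar>)"

lemma two_small:
  assumes "FV (x,y,z) = V" "\<bar>y\<bar> \<le> 1" "\<bar>z\<bar> \<le> 1" "0 \<le> V"
  shows "\<bar>x\<bar> \<le> V + 3"
proof (rule ccontr)
  assume "\<not> ?thesis"
  hence h: "\<bar>x\<bar> > V + 3" by simp
  have e: "x^2 = 2*x*y*z - y^2 - z^2 + 1 + V" using assms(1) by (simp add: FV_simp)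
  have "\<bar>y*z\<bar> \<le> 1" using assms(2,3) by (simp add: abs_mult mult_le_one)
  hence "\<bar>2*x*y*z\<bar> \<le> 2*\<bar>x\<bar>"
    by (simp add: abs_mult mult.assoc mult_left_le)
  hence "x^2 \<le> 2*\<bar>x\<bar> + 1 + V" using e by (smt (verit) zero_le_power2)
  moreover have "x^2 = \<bar>x\<bar> * \<bar>x\<bar>" by (simp add: power2_eq_square abs_mult_self_eq)
  moreover have "\<bar>x\<bar> * \<bar>x\<bar> > \<bar>x\<bar> * (V+3)" proof -
    have "0 < \<bar>x\<bar>" using h assms(4) by simp
    thus ?thesis using h by (rule mult_strict_left_mono[rotated])
  qed
  moreover have "\<bar>x\<bar> * (V+1) \<ge> (V+1)"
    using h assms(4) mult_right_mono[of 1 "\<bar>x\<bar>" "V+1"] by simp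
  moreover have "\<bar>x\<bar> * (V+3) = 2*\<bar>x\<bar> + \<bar>x\<bar> * (V+1)" by (simp add: algebra_simps)
  ultimately show False by linarith
qed

lemma FV_sym1: "FV (x,y,z) = FV (y,x,z)" by (simp add: FV_simp algebra_simps)
lemma FV_sym2: "FV (x,y,z) = FV (z,y,x)" by (simp add: FV_simp algebra_simps)

lemma step_bound:
  assumes "FV (x,y,z) = V" "0 \<le> V" "\<not> Rc (x,y,z)" "\<not> Rc (fmap (x,y,z))"
    "\<bar>z\<bar> \<le> M" "V + 3 \<le> M"
  shows "\<bar>x\<bar> \<le> M"
proof (cases "\<bar>x\<bar> \<le> 1")
  case True thus ?thesis using assms by linarith
next
  case xb: False
  show ?thesis
  proof (cases "\<bar>y\<bar> > 1")
    case True
    with assms(3) xb have "\<bar>z\<bar> > \<bar>x\<bar> * \<bar>y\<bar>" by (auto simp: Rc_def)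
    moreover have "\<bar>x\<bar> * \<bar>y\<bar> \<ge> \<bar>x\<bar> * 1" using True xb
      by (intro mult_left_mono) auto
    ultimately show ?thesis using assms(5) by linarith
  next
    case yb: False
    show ?thesis
    proof (cases "\<bar>z\<bar> \<le> 1")
      case True
      from two_small[OF assms(1) _ True assms(2)] yb assms(6) show ?thesis by linarith
    next
      case False
      define t where "t = 2*x*y - z"
      have "\<bar>t\<bar> \<le> 1"
      proof (rule ccontr)
        assume tb: "\<not> \<bar>t\<bar> \<le> 1"
        have "\<bar>t\<bar> * \<bar>x\<bar> \<ge> 1 * 1" using tb xb by (intro mult_mono) auto
        hence "Rc (fmap (x,y,z))" using tb xb yb by (auto simp: Rc_def t_def)
        thus False using assms(4) by simp
      qed
      have "FV (t,x,y) = V" using assms(1) FV_fmap[of "(x,y,z)"] by (simp add: t_def)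
      hence "FV (x,t,y) = V" by (simp add: FV_sym1)
      from two_small[OF this \<open>\<bar>t\<bar> \<le> 1\<close> _ assms(2)] yb assms(6) show ?thesis by linarith
    qed
  qed
qed

lemma fst_le: "\<bar>fst (q::real\<times>real\<times>real)\<bar> \<le> norm q"
  using norm_fst_le[of "fst q" "snd q"] by simp

lemma esc_step:
  assumes "Rc q" "m \<le> \<bar>fst q\<bar>" "m \<le> \<bar>fst (snd q)\<bar>" "1 < m"
  shows "Rc (fmap q) \<and> m \<le> \<bar>fst (fmap q)\<bar> \<and> m \<le> \<bar>fst (snd (fmap q))\<bar>
         \<and> \<bar>fst (fmap q)\<bar> \<ge> \<bar>fst q\<bar> + (m - 1)"
proof -
  obtain x y z where q: "q = (x,y,z)" by (cases q) auto
  have xb: "1 < \<bar>x\<bar>" and yb: "1 < \<bar>y\<bar>" and zb: "\<bar>z\<bar> \<le> \<bar>x\<bar> * \<bar>y\<bar>"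
    using assms(1) by (auto simp: Rc_def q)
  have mx: "m \<le> \<bar>x\<bar>" and my: "m \<le> \<bar>y\<bar>" using assms(2,3) by (auto simp: q)
  define t where "t = 2*x*y - z"
  have "\<bar>2*x*y\<bar> = 2*(\<bar>x\<bar>*\<bar>y\<bar>)" by (simp add: abs_mult)
  hence t1: "\<bar>t\<bar> \<ge> \<bar>x\<bar> * \<bar>y\<bar>" using zb unfolding t_def by linarith
  have p1: "\<bar>x\<bar> * \<bar>y\<bar> \<ge> \<bar>x\<bar> * m" using mx my assms(4) by (intro mult_left_mono) auto
  have p2: "\<bar>x\<bar> * m = \<bar>x\<bar> + \<bar>x\<bar> * (m - 1)" by (simp add: algebra_simps)
  have p3: "\<bar>x\<bar> * (m - 1) \<ge> (m - 1)" using xb assms(4) mult_right_mono[of 1 "\<bar>x\<bar>" "m - 1"] by simp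
  have p4: "\<bar>y\<bar> * 1 \<le> \<bar>y\<bar> * \<bar>x\<bar>" using xb by (intro mult_left_mono) auto
  have p5: "\<bar>t\<bar> * \<bar>x\<bar> \<ge> \<bar>t\<bar> * 1" using xb by (intro mult_left_mono) auto
  have "\<bar>t\<bar> \<ge> \<bar>x\<bar> + (m - 1)" using t1 p1 p2 p3 by linarith
  moreover have "\<bar>y\<bar> \<le> \<bar>t\<bar> * \<bar>x\<bar>" using t1 p4 p5 by (simp add: mult.commute)
  ultimately show ?thesis using xb mx assms(4) by (auto simp: q Rc_def t_def)
qed

lemma escape:
  assumes "Rc p"
  shows "\<not> bounded (range (\<lambda>k. (fmap ^^ k) p))"
proof
  assume bd: "bounded (range (\<lambda>k. (fmap ^^ k) p))"
  then obtain B where B: "\<And>k. norm ((fmap ^^ k) p) \<le> B" by (auto simp: bounded_iff)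
  define m where "m = min \<bar>fst p\<bar> \<bar>fst (snd p)\<bar>"
  have m1: "1 < m" using assms by (auto simp: Rc_def m_def)
  have inv: "Rc ((fmap ^^ k) p) \<and> m \<le> \<bar>fst ((fmap ^^ k) p)\<bar> \<and> m \<le> \<bar>fst (snd ((fmap ^^ k) p))\<bar>
        \<and> \<bar>fst ((fmap ^^ k) p)\<bar> \<ge> \<bar>fst p\<bar> + real k * (m - 1)" for k
  proof (induction k)
    case 0 thus ?case using assms by (auto simp: m_def)
  next
    case (Suc k)
    from esc_step[of "(fmap ^^ k) p" m] Suc m1 show ?case by (auto simp: algebra_simps)
  qed
  obtain k :: nat where k: "real k > B / (m - 1)" using reals_Archimedean2 by blast
  have "real k * (m - 1) > B" using k m1 by (simp add: field_simps)
  moreover have "\<bar>fst ((fmap ^^ k) p)\<bar> \<le> B"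
    using B[of k] fst_le[of "(fmap ^^ k) p"] by simp
  moreover have "\<bar>fst p\<bar> \<ge> 0" by simp
  ultimately show False using inv[of k] by linarith
qed

lemma Rc_Ro: assumes "Rc q" shows "Ro (fmap q)"
proof -
  obtain x y z where q: "q = (x,y,z)" by (cases q) auto
  have xb: "1 < \<bar>x\<bar>" and yb: "1 < \<bar>y\<bar>" and zb: "\<bar>z\<bar> \<le> \<bar>x\<bar> * \<bar>y\<bar>"
    using assms(1) by (auto simp: Rc_def q)
  define t where "t = 2*x*y - z"
  have "\<bar>2*x*y\<bar> = 2*(\<bar>x\<bar>*\<bar>y\<bar>)" by (simp add: abs_mult)
  hence t1: "\<bar>t\<bar> \<ge> \<bar>x\<bar> * \<bar>y\<bar>" using zb unfolding t_def by linarith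
  have p1: "\<bar>x\<bar> * \<bar>y\<bar> > 1 * \<bar>y\<bar>" using xb yb by (intro mult_strict_right_mono) auto
  have p5: "\<bar>t\<bar> * \<bar>x\<bar> \<ge> \<bar>t\<bar> * 1" using xb by (intro mult_left_mono) auto
  have "\<bar>t\<bar> > 1" using t1 p1 yb by simp
  moreover have "\<bar>y\<bar> < \<bar>t\<bar> * \<bar>x\<bar>" using t1 p1 p5 by simp
  ultimately show ?thesis using xb by (auto simp: q Ro_def t_def)
qed

lemma never:
  assumes "\<And>k. \<not> Rc ((fmap ^^ k) p)" "0 \<le> FV p"
  shows "bounded (range (\<lambda>k. (fmap ^^ k) p))"
proof -
  define M where "M = max (FV p + 3) (max \<bar>fst (snd p)\<bar> \<bar>snd (snd p)\<bar>)"
  have A: "\<bar>fst (snd ((fmap ^^ k) p))\<bar> \<le> M \<and> \<bar>snd (snd ((fmap ^^ k) p))\<bar> \<le> M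
     \<and> \<bar>fst ((fmap ^^ k) p)\<bar> \<le> M" for k
  proof (induction k)
    case 0
    obtain x y z where q: "p = (x,y,z)" by (cases p) auto
    have "\<bar>x\<bar> \<le> M"
      using step_bound[of x y z "FV p" M] assms(1)[of 0] assms(1)[of 1] assms(2)
      by (auto simp: q M_def)
    thus ?case by (auto simp: q M_def le_max_iff_disj)
  next
    case (Suc k)
    obtain x y z where q: "(fmap ^^ k) p = (x,y,z)" by (cases "(fmap ^^ k) p") auto
    have fv: "FV (x,y,z) = FV p" using FV_iter[of k p] q by simp
    have "\<bar>fst ((fmap ^^ Suc k) p)\<bar> \<le> M"
    proof -
      obtain a b c where q2: "(fmap ^^ Suc k) p = (a,b,c)" by (cases "(fmap ^^ Suc k) p") auto
      have fv2: "FV (a,b,c) = FV p" using FV_iter[of "Suc k" p] q2 by simp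
      have "\<not> Rc (fmap (a,b,c))" using assms(1)[of "Suc (Suc k)"] q2 by simp
      moreover have "\<bar>c\<bar> \<le> M" using Suc q q2 by auto
      ultimately show ?thesis
        using step_bound[OF fv2 assms(2), of M] assms(1)[of "Suc k"] q2 by (auto simp: M_def)
    qed
    thus ?case using Suc q by auto
  qed
  have "norm ((fmap ^^ k) p) \<le> 3 * M" for k
  proof -
    obtain x y z where q: "(fmap ^^ k) p = (x,y,z)" by (cases "(fmap ^^ k) p") auto
    have "norm (x,y,z) \<le> norm x + norm (y,z)" by (rule norm_Pair_le)
    also have "\<dots> \<le> norm x + (norm y + norm z)" using norm_Pair_le[of y z] by simp
    finally show ?thesis using A[of k] q by simp
  qed
  thus ?thesis by (auto simp: bounded_iff)
qed

lemma fmap_alt: "fmap p = (2 * fst p * fst (snd p) - snd (snd p), fst p, fst (snd p))"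
  by (cases p) auto

lemma FV_alt: "FV p = (fst p)^2 + (fst (snd p))^2 + (snd (snd p))^2 - 2 * fst p * fst (snd p) * snd (snd p) - 1"
  by (cases p) (auto simp: FV_simp)

lemma cont_fmap[continuous_intros]:
  "continuous_on S h \<Longrightarrow> continuous_on S (\<lambda>p. fmap (h p))"
  unfolding fmap_alt by (intro continuous_intros)

lemma cont_iter[continuous_intros]:
  "continuous_on S h \<Longrightarrow> continuous_on S (\<lambda>p. (fmap ^^ k) (h p))"
  by (induction k) (auto intro: continuous_intros)

lemma cont_FV[continuous_intros]:
  "continuous_on S h \<Longrightarrow> continuous_on S (\<lambda>p. FV (h p))"
  unfolding FV_alt by (intro continuous_intros)

lemma shift_bounded:
  assumes "bounded (range (\<lambda>k. (fmap ^^ k) p))"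
  shows "bounded (range (\<lambda>j. (fmap ^^ j) ((fmap ^^ k) p)))"
proof -
  have "range (\<lambda>j. (fmap ^^ j) ((fmap ^^ k) p)) \<subseteq> range (\<lambda>k. (fmap ^^ k) p)"
  proof
    fix q assume "q \<in> range (\<lambda>j. (fmap ^^ j) ((fmap ^^ k) p))"
    then obtain j where "q = (fmap ^^ j) ((fmap ^^ k) p)" by auto
    hence "q = (fmap ^^ (j + k)) p" by (simp add: funpow_add)
    thus "q \<in> range (\<lambda>k. (fmap ^^ k) p)" by auto
  qed
  thus ?thesis using assms bounded_subset by blast
qed

theorem lemma4p2:
  fixes V0 :: real and V1 :: ereal
  assumes "0 \<le> V0" and "ereal V0 \<le> V1"
  shows "closed {p \<in> (\<Union>V \<in> {V. V0 \<le> V \<and> ereal V \<le> V1}. level_set V).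
                   bounded (range (\<lambda>k. (fmap ^^ k) p))}"
proof -
  let ?L = "{p. V0 \<le> FV p} \<inter> {p. ereal (FV p) \<le> V1}"
  let ?N = "\<Inter>k. {p. \<not> Ro ((fmap ^^ k) p)}"
  have eq: "{p \<in> (\<Union>V \<in> {V. V0 \<le> V \<and> ereal V \<le> V1}. level_set V).
                   bounded (range (\<lambda>k. (fmap ^^ k) p))} = ?L \<inter> ?N"
  proof (intro equalityI subsetI)
    fix p assume p: "p \<in> {p \<in> (\<Union>V \<in> {V. V0 \<le> V \<and> ereal V \<le> V1}. level_set V).
                   bounded (range (\<lambda>k. (fmap ^^ k) p))}"
    hence pL: "p \<in> ?L" and bd: "bounded (range (\<lambda>k. (fmap ^^ k) p))"
      by (auto simp: level_set_def)
    have "\<not> Ro ((fmap ^^ k) p)" for k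
    proof
      assume "Ro ((fmap ^^ k) p)"
      hence "Rc ((fmap ^^ k) p)" by (auto simp: Ro_def Rc_def)
      from escape[OF this] shift_bounded[OF bd, of k] show False by simp
    qed
    thus "p \<in> ?L \<inter> ?N" using pL by auto
  next
    fix p assume p: "p \<in> ?L \<inter> ?N"
    have "\<not> Rc ((fmap ^^ k) p)" for k
    proof
      assume "Rc ((fmap ^^ k) p)"
      from Rc_Ro[OF this] p show False by (auto simp del: funpow.simps
        simp: funpow_Suc_right[symmetric] comp_def) (metis funpow.simps(2) o_apply)
    qed
    moreover have "0 \<le> FV p" using p assms(1) by auto
    ultimately have "bounded (range (\<lambda>k. (fmap ^^ k) p))" by (rule never)
    thus "p \<in> {p \<in> (\<Union>V \<in> {V. V0 \<le> V \<and> ereal V \<le> V1}. level_set V).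
                   bounded (range (\<lambda>k. (fmap ^^ k) p))}" using p by (auto simp: level_set_def)
  qed
  have c1: "closed {p. V0 \<le> FV p}"
    by (intro closed_Collect_le continuous_intros)
  have c2: "closed {p. ereal (FV p) \<le> V1}"
  proof (cases V1)
    case (real r)
    hence "{p. ereal (FV p) \<le> V1} = {p. FV p \<le> r}" by auto
    moreover have "closed {p. FV p \<le> r}" by (intro closed_Collect_le continuous_intros)
    ultimately show ?thesis by simp
  next
    case PInf thus ?thesis by simp
  next
    case MInf thus ?thesis by simp
  qed
  have c3: "closed {p. \<not> Ro ((fmap ^^ k) p)}" for k
  proof -
    have "open {p. Ro ((fmap ^^ k) p)}" unfolding Ro_def
      by (intro open_Collect_conj open_Collect_less continuous_intros)
    hence "closed (- {p. Ro ((fmap ^^ k) p)})" by (simp add: closed_Compl)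
    thus ?thesis by (simp add: Compl_eq)
  qed
  show ?thesis unfolding eq using c1 c2 c3 by (intro closed_Int closed_INT) auto
qed

end
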